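(* Let $k,l$ be positive integers and put $a=3k-2$, $b=3l-2$. For every cell $c$ of the Aztec rectangle $\mathcal{AR}_{a,b}$, the region $\mathcal{AR}_{a,b}$ with the single defect $c$ has a cover by L-trominoes, i.e. $\mathcal{AR}_{a,b}\setminus\{c\}$ can be partitioned into L-trominoes.
   Context: A cell is a unit square $[i,i+1]\times[j,j+1]$ with $i,j\in\mathbb{Z}$, labelled $(i,j)$. An L-tromino is a set of three cells equal to a $2\times 2$ block of cells with one cell removed. A defect is a cell of a region that must not be covered. A cover of a region $R$ with defect set $D$ is a set of pairwise disjoint L-trominoes, each contained in $R\setminus D$, whose union is $R\setminus D$. For positive integers $a,b$, the Aztec rectangle $\mathcal{AR}_{a,b}$ is (up to translation) the region consisting of the cells $(i,j)\in\mathbb{Z}^2$ with $0\le i+j\le 2b$ and $1\le j-i\le 2a+1$; it has $a$ cells along its southwestern side and $b$ cells along its northwestern side. *)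

theory Defs
  imports Main
begin

type_synonym cell = "int \<times> int"

definition block2 :: "cell \<Rightarrow> cell set" where
  "block2 c = {(fst c, snd c), (fst c + 1, snd c), (fst c, snd c + 1), (fst c + 1, snd c + 1)}"

definition is_L_tromino :: "cell set \<Rightarrow> bool" where
  "is_L_tromino T \<longleftrightarrow> (\<exists>c d. d \<in> block2 c \<and> T = block2 c - {d})"

definition is_cover :: "cell set set \<Rightarrow> cell set \<Rightarrow> cell set \<Rightarrow> bool" where
  "is_cover \<T> R D \<longleftrightarrow>
     (\<forall>T\<in>\<T>. is_L_tromino T \<and> T \<subseteq> R - D) \<and>
     (\<forall>T1\<in>\<T>. \<forall>T2\<in>\<T>. T1 \<noteq> T2 \<longrightarrow> T1 \<inter> T2 = {}) \<and>
     \<Union>\<T> = R - D"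

definition has_cover :: "cell set \<Rightarrow> cell set \<Rightarrow> bool" where
  "has_cover R D \<longleftrightarrow> (\<exists>\<T>. is_cover \<T> R D)"

definition aztec_rect :: "nat \<Rightarrow> nat \<Rightarrow> cell set" where
  "aztec_rect a b = {(i, j). 0 \<le> i + j \<and> i + j \<le> 2 * int b \<and> 1 \<le> j - i \<and> j - i \<le> 2 * int a + 1}"

end

theory Submission
  imports Defs
begin
definition Reg :: "int \<Rightarrow> int \<Rightarrow> int \<Rightarrow> int \<Rightarrow> cell set" where
  "Reg u0 u1 v0 v1 = {(i,j). u0 \<le> i+j \<and> i+j \<le> u1 \<and> v0 \<le> j-i \<and> j-i \<le> v1}"

lemma Lshape: "d \<in> block2 c \<Longrightarrow> is_L_tromino (block2 c - {d})"
  unfolding is_L_tromino_def by blast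

lemma r1: "Reg (x+y) (x+y+2) (y-x) (y-x+1) = block2 (x,y) - {(x+1,y)}"
  unfolding Reg_def block2_def
  apply (rule set_eqI) apply clarsimp apply arith done
lemma r2: "Reg (x+y) (x+y+2) (y-x-1) (y-x-1+1) = block2 (x,y) - {(x,y+1)}"
  unfolding Reg_def block2_def
  apply (rule set_eqI) apply clarsimp apply arith done
lemma r3: "Reg (x+y) (x+y+1) (y-x) (y-x+2) = block2 (x-1,y) - {(x-1,y)}"
  unfolding Reg_def block2_def
  apply (rule set_eqI) apply clarsimp apply arith done
lemma r4: "Reg (x+y) (x+y+1) (y-x-1) (y-x-1+2) = block2 (x,y) - {(x+1,y+1)}"
  unfolding Reg_def block2_def
  apply (rule set_eqI) apply clarsimp apply arith done

lemma cover_empty: "has_cover {} D"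
  unfolding has_cover_def is_cover_def by (rule exI[of _ "{}"]) simp

lemma cover_single: "is_L_tromino T \<Longrightarrow> has_cover T {}"
  unfolding has_cover_def is_cover_def by (rule exI[of _ "{T}"]) simp

lemma cover_union:
  assumes "has_cover R1 D" "has_cover R2 {}" and dis: "R1 \<inter> R2 = {}" and sub: "D \<subseteq> R1"
  shows "has_cover (R1 \<union> R2) D"
proof -
  obtain T1 where t1: "is_cover T1 R1 D" using assms(1) unfolding has_cover_def by blast
  obtain T2 where t2: "is_cover T2 R2 {}" using assms(2) unfolding has_cover_def by blast
  have a1: "\<And>T. T \<in> T1 \<Longrightarrow> is_L_tromino T \<and> T \<subseteq> R1 - D"
   and b1: "\<And>A B. A \<in> T1 \<Longrightarrow> B \<in> T1 \<Longrightarrow> A \<noteq> B \<Longrightarrow> A \<inter> B = {}"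
   and c1: "\<Union>T1 = R1 - D" using t1 unfolding is_cover_def by auto
  have a2: "\<And>T. T \<in> T2 \<Longrightarrow> is_L_tromino T \<and> T \<subseteq> R2"
   and b2: "\<And>A B. A \<in> T2 \<Longrightarrow> B \<in> T2 \<Longrightarrow> A \<noteq> B \<Longrightarrow> A \<inter> B = {}"
   and c2: "\<Union>T2 = R2" using t2 unfolding is_cover_def by auto
  have P1: "\<forall>T\<in>T1 \<union> T2. is_L_tromino T \<and> T \<subseteq> R1 \<union> R2 - D"
    using a1 a2 dis sub by blast
  have P2: "\<forall>A\<in>T1 \<union> T2. \<forall>B\<in>T1 \<union> T2. A \<noteq> B \<longrightarrow> A \<inter> B = {}"
  proof (intro ballI impI)
    fix A B assume A: "A \<in> T1 \<union> T2" and B: "B \<in> T1 \<union> T2" and ne: "A \<noteq> B"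
    have sA: "A \<in> T1 \<Longrightarrow> A \<subseteq> R1" "A \<in> T2 \<Longrightarrow> A \<subseteq> R2" using a1 a2 by blast+
    have sB: "B \<in> T1 \<Longrightarrow> B \<subseteq> R1" "B \<in> T2 \<Longrightarrow> B \<subseteq> R2" using a1 a2 by blast+
    show "A \<inter> B = {}"
      using A B ne b1 b2 sA sB dis by blast
  qed
  have "\<Union>(T1 \<union> T2) = (R1 - D) \<union> R2" using c1 c2 by simp
  also have "\<dots> = R1 \<union> R2 - D" using dis sub by blast
  finally have P3: "\<Union>(T1 \<union> T2) = R1 \<union> R2 - D" .
  have "is_cover (T1 \<union> T2) (R1 \<union> R2) D"
    unfolding is_cover_def using P1 P2 P3 by blast
  then show ?thesis unfolding has_cover_def by blast
qed

lemma split_xy: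
  fixes u0 v0 :: int
  obtains x y where "u0 = x + y" "v0 = y - x \<or> v0 = y - x - 1"
proof -
  define x where "x = (u0 - v0) div 2"
  define y where "y = u0 - x"
  have m: "u0 - v0 = 2*x + (u0-v0) mod 2" unfolding x_def by simp
  have "(u0-v0) mod 2 = 0 \<or> (u0-v0) mod 2 = 1" by auto
  then have "v0 = y - x \<or> v0 = y - x - 1" using m unfolding y_def by auto
  then show ?thesis using that[of x y] unfolding y_def by simp
qed

lemma tromU: "is_L_tromino (Reg u0 (u0+2) v0 (v0+1))"
proof -
  obtain x y where xy: "u0 = x + y" "v0 = y - x \<or> v0 = y - x - 1" by (rule split_xy)
  from xy(2) show ?thesis
  proof
    assume v: "v0 = y - x" show ?thesis unfolding xy(1) v r1 by (rule Lshape) (simp add: block2_def)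
  next
    assume v: "v0 = y - x - 1" show ?thesis unfolding xy(1) v r2 by (rule Lshape) (simp add: block2_def)
  qed
qed

lemma tromV: "is_L_tromino (Reg u0 (u0+1) v0 (v0+2))"
proof -
  obtain x y where xy: "u0 = x + y" "v0 = y - x \<or> v0 = y - x - 1" by (rule split_xy)
  from xy(2) show ?thesis
  proof
    assume v: "v0 = y - x" show ?thesis unfolding xy(1) v r3 by (rule Lshape) (simp add: block2_def)
  next
    assume v: "v0 = y - x - 1" show ?thesis unfolding xy(1) v r4 by (rule Lshape) (simp add: block2_def)
  qed
qed

lemma zigU: "u1 = u0 + 3 * int n - 1 \<Longrightarrow> has_cover (Reg u0 u1 v0 (v0+1)) {}"
proof (induction n arbitrary: u0 u1)
  case 0
  then have "Reg u0 u1 v0 (v0+1) = {}" unfolding Reg_def by auto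
  then show ?case using cover_empty by simp
next
  case (Suc n)
  have e: "Reg u0 u1 v0 (v0+1) = Reg u0 (u0+2) v0 (v0+1) \<union> Reg (u0+3) u1 v0 (v0+1)"
    using Suc.prems unfolding Reg_def by (intro set_eqI) (clarsimp, arith)
  have d: "Reg u0 (u0+2) v0 (v0+1) \<inter> Reg (u0+3) u1 v0 (v0+1) = {}"
    unfolding Reg_def by auto
  have "has_cover (Reg (u0+3) u1 v0 (v0+1)) {}" by (rule Suc.IH; use Suc.prems in simp)
  then show ?case unfolding e using cover_union[OF cover_single[OF tromU] _ d] by simp
qed

lemma zigV: "v1 = v0 + 3 * int n - 1 \<Longrightarrow> has_cover (Reg u0 (u0+1) v0 v1) {}"
proof (induction n arbitrary: v0 v1)
  case 0
  then have "Reg u0 (u0+1) v0 v1 = {}" unfolding Reg_def by auto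
  then show ?case using cover_empty by simp
next
  case (Suc n)
  have e: "Reg u0 (u0+1) v0 v1 = Reg u0 (u0+1) v0 (v0+2) \<union> Reg u0 (u0+1) (v0+3) v1"
    using Suc.prems unfolding Reg_def by (intro set_eqI) (clarsimp, arith)
  have d: "Reg u0 (u0+1) v0 (v0+2) \<inter> Reg u0 (u0+1) (v0+3) v1 = {}"
    unfolding Reg_def by auto
  have "has_cover (Reg u0 (u0+1) (v0+3) v1) {}" by (rule Suc.IH; use Suc.prems in simp)
  then show ?case unfolding e using cover_union[OF cover_single[OF tromV] _ d] by simp
qed

lemma stackV: "u1 = u0 + 3 * int n - 1 \<Longrightarrow> v1 = v0 + 2 * int m - 1 \<Longrightarrow> has_cover (Reg u0 u1 v0 v1) {}"
proof (induction m arbitrary: v0 v1)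
  case 0
  then have "Reg u0 u1 v0 v1 = {}" unfolding Reg_def by auto
  then show ?case using cover_empty by simp
next
  case (Suc m)
  have e: "Reg u0 u1 v0 v1 = Reg u0 u1 v0 (v0+1) \<union> Reg u0 u1 (v0+2) v1"
    using Suc.prems unfolding Reg_def by (intro set_eqI) (clarsimp, arith)
  have d: "Reg u0 u1 v0 (v0+1) \<inter> Reg u0 u1 (v0+2) v1 = {}"
    unfolding Reg_def by auto
  have "has_cover (Reg u0 u1 (v0+2) v1) {}" by (rule Suc.IH; use Suc.prems in simp)
  then show ?case unfolding e using cover_union[OF zigU[OF Suc.prems(1)] _ d] by simp
qed

lemma stackU: "u1 = u0 + 2 * int m - 1 \<Longrightarrow> v1 = v0 + 3 * int n - 1 \<Longrightarrow> has_cover (Reg u0 u1 v0 v1) {}"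
proof (induction m arbitrary: u0 u1)
  case 0
  then have "Reg u0 u1 v0 v1 = {}" unfolding Reg_def by auto
  then show ?case using cover_empty by simp
next
  case (Suc m)
  have e: "Reg u0 u1 v0 v1 = Reg u0 (u0+1) v0 v1 \<union> Reg (u0+2) u1 v0 v1"
    using Suc.prems unfolding Reg_def by (intro set_eqI) (clarsimp, arith)
  have d: "Reg u0 (u0+1) v0 v1 \<inter> Reg (u0+2) u1 v0 v1 = {}"
    unfolding Reg_def by auto
  have "has_cover (Reg (u0+2) u1 v0 v1) {}" by (rule Suc.IH; use Suc.prems in simp)
  then show ?case unfolding e using cover_union[OF zigV[OF Suc.prems(2)] _ d] by simp
qed


definition A :: "int \<Rightarrow> int \<Rightarrow> nat \<Rightarrow> nat \<Rightarrow> cell set" where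
  "A p q k l = Reg (2*p) (2*p + 6*int l + 2) (2*q+1) (2*q + 6*int k + 3)"

lemma cover_block: "c \<in> block2 e \<Longrightarrow> has_cover (block2 e) {c}"
  unfolding has_cover_def is_cover_def
  by (rule exI[of _ "{block2 e - {c}}"]) (auto intro: Lshape)

lemma base: "c \<in> A p q 0 0 \<Longrightarrow> has_cover (A p q 0 0) {c}"
proof -
  have "A p q 0 0 = block2 (p-q-1, p+q+1)"
    unfolding A_def Reg_def block2_def by (rule set_eqI) (clarsimp, arith)
  then show "c \<in> A p q 0 0 \<Longrightarrow> has_cover (A p q 0 0) {c}" using cover_block by simp
qed

lemma stepK:
  assumes IH: "\<And>p q c. c \<in> A p q k l \<Longrightarrow> has_cover (A p q k l) {c}"
    and c: "c \<in> A p q (Suc k) l"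
  shows "has_cover (A p q (Suc k) l) {c}"
proof -
  obtain i j where ij: "c = (i,j)" by (cases c)
  have r: "2*q+1 \<le> j - i" "j - i \<le> 2*q + 6*int k + 9" using c unfolding ij A_def Reg_def by auto
  obtain s :: nat where s: "s \<le> 3" "2*q + 2*int s + 1 \<le> j - i" "j - i \<le> 2*q + 2*int s + 6*int k + 3"
  proof -
    consider "j - i \<le> 2*q + 6*int k + 3" | "2*q + 6*int k + 3 < j - i" "j - i \<le> 2*q + 6*int k + 5"
      | "2*q + 6*int k + 5 < j - i" "j - i \<le> 2*q + 6*int k + 7" | "2*q + 6*int k + 7 < j - i" by linarith
    then show ?thesis
    proof cases
      case 1 then show ?thesis using that[of 0] r by simp
    next
      case 2 then show ?thesis using that[of 1] r by simp
    next
      case 3 then show ?thesis using that[of 2] r by simp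
    next
      case 4 then show ?thesis using that[of 3] r by simp
    qed
  qed
  define Mid where "Mid = A p (q + int s) k l"
  define Low where "Low = Reg (2*p) (2*p + 6*int l + 2) (2*q+1) (2*q + 2*int s)"
  define Up where "Up = Reg (2*p) (2*p + 6*int l + 2) (2*q + 2*int s + 6*int k + 4) (2*q + 6*int k + 9)"
  have eq: "A p q (Suc k) l = (Mid \<union> Low) \<union> Up"
    unfolding Mid_def Low_def Up_def A_def Reg_def using s(1)
    by (intro set_eqI) (clarsimp, arith)
  have cm: "c \<in> Mid" using c s unfolding ij Mid_def A_def Reg_def by auto
  have hm: "has_cover Mid {c}" using IH cm unfolding Mid_def by blast
  have hl: "has_cover Low {}" unfolding Low_def
    by (rule stackV[where n = "2*l+1" and m = s]) simp_all
  have hu: "has_cover Up {}" unfolding Up_def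
    by (rule stackV[where n = "2*l+1" and m = "3 - s"]) (use s(1) in \<open>simp_all add: of_nat_diff\<close>)
  have d1: "Mid \<inter> Low = {}" unfolding Mid_def Low_def A_def Reg_def by auto
  have d2: "(Mid \<union> Low) \<inter> Up = {}" unfolding Mid_def Low_def Up_def A_def Reg_def by auto
  have "has_cover (Mid \<union> Low) {c}" using cover_union[OF hm hl d1] cm by simp
  then have "has_cover ((Mid \<union> Low) \<union> Up) {c}" using cover_union[OF _ hu d2] cm by simp
  then show ?thesis unfolding eq .
qed

lemma stepL:
  assumes IH: "\<And>p q c. c \<in> A p q k l \<Longrightarrow> has_cover (A p q k l) {c}"
    and c: "c \<in> A p q k (Suc l)"
  shows "has_cover (A p q k (Suc l)) {c}"
proof -
  obtain i j where ij: "c = (i,j)" by (cases c)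
  have r: "2*p \<le> i + j" "i + j \<le> 2*p + 6*int l + 8" using c unfolding ij A_def Reg_def by auto
  obtain s :: nat where s: "s \<le> 3" "2*p + 2*int s \<le> i + j" "i + j \<le> 2*p + 2*int s + 6*int l + 2"
  proof -
    consider "i + j \<le> 2*p + 6*int l + 2" | "2*p + 6*int l + 2 < i + j" "i + j \<le> 2*p + 6*int l + 4"
      | "2*p + 6*int l + 4 < i + j" "i + j \<le> 2*p + 6*int l + 6" | "2*p + 6*int l + 6 < i + j" by linarith
    then show ?thesis
    proof cases
      case 1 then show ?thesis using that[of 0] r by simp
    next
      case 2 then show ?thesis using that[of 1] r by simp
    next
      case 3 then show ?thesis using that[of 2] r by simp
    next
      case 4 then show ?thesis using that[of 3] r by simp
    qed
  qed
  define Mid where "Mid = A (p + int s) q k l"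
  define Low where "Low = Reg (2*p) (2*p + 2*int s - 1) (2*q+1) (2*q + 6*int k + 3)"
  define Up where "Up = Reg (2*p + 2*int s + 6*int l + 3) (2*p + 6*int l + 8) (2*q+1) (2*q + 6*int k + 3)"
  have eq: "A p q k (Suc l) = (Mid \<union> Low) \<union> Up"
    unfolding Mid_def Low_def Up_def A_def Reg_def using s(1)
    by (intro set_eqI) (clarsimp, arith)
  have cm: "c \<in> Mid" using c s unfolding ij Mid_def A_def Reg_def by auto
  have hm: "has_cover Mid {c}" using IH cm unfolding Mid_def by blast
  have hl: "has_cover Low {}" unfolding Low_def
    by (rule stackU[where n = "2*k+1" and m = s]) simp_all
  have hu: "has_cover Up {}" unfolding Up_def
    by (rule stackU[where n = "2*k+1" and m = "3 - s"]) (use s(1) in \<open>simp_all add: of_nat_diff\<close>)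
  have d1: "Mid \<inter> Low = {}" unfolding Mid_def Low_def A_def Reg_def by auto
  have d2: "(Mid \<union> Low) \<inter> Up = {}" unfolding Mid_def Low_def Up_def A_def Reg_def by auto
  have "has_cover (Mid \<union> Low) {c}" using cover_union[OF hm hl d1] cm by simp
  then have "has_cover ((Mid \<union> Low) \<union> Up) {c}" using cover_union[OF _ hu d2] cm by simp
  then show ?thesis unfolding eq .
qed

lemma allP: "c \<in> A p q k l \<Longrightarrow> has_cover (A p q k l) {c}"
proof (induction k arbitrary: p q c)
  case 0
  then show ?case
  proof (induction l arbitrary: p q c)
    case 0 then show ?case by (rule base)
  next
    case (Suc l) then show ?case using stepL by blast
  qed
next
  case (Suc k) then show ?case using stepK by blast
qed

theorem theorem2:
  fixes k l :: nat and c :: cell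
  assumes "k \<ge> 1" and "l \<ge> 1"
    and "c \<in> aztec_rect (3 * k - 2) (3 * l - 2)"
  shows "has_cover (aztec_rect (3 * k - 2) (3 * l - 2)) {c}"
proof -
  obtain k' where k: "k = Suc k'" using assms(1) by (cases k) auto
  obtain l' where l: "l = Suc l'" using assms(2) by (cases l) auto
  have e: "aztec_rect (3 * k - 2) (3 * l - 2) = A 0 0 k' l'"
    unfolding k l aztec_rect_def A_def Reg_def by (intro set_eqI) (clarsimp, arith)
  show ?thesis using assms(3) allP unfolding e by blast
qed

end
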